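(* In the setting below, fix a strategy $\pi$, thresholds $0=v_0\le v_1\le\dots\le v_{n_p}=1$ and $\eta\in(0,1)$, and let $K^\pi_k$ and $H^{q,\pi,\epsilon}_{k,i}$ be as defined below. Let $k\in\{0,\dots,N\}$ and $q\in Q$, and assume that for every $k'\in\{k,\dots,N-1\}$ and every cell $q''\in Q$ the sets $H^{q'',\pi,\epsilon}_{k',i}$, $i=1,\dots,n_p$, are pairwise disjoint. Then $$\inf_{x\in q}V^\pi_k(x)\ \ge\ K^\pi_k(q).$$
   Context: Setting (BNN dynamical system). Let $f^w:\mathbb{R}^n\times\mathbb{R}^c\to\mathbb{R}^n$ be a neural network with parameter vector $w\in\mathbb{R}^{n_w}$, measurable in $(w,x,u)$, and let $p_{\mathbf{w}}(w\mid\mathcal{D})$ be a probability density on $\mathbb{R}^{n_w}$. Fix $\sigma>0$. The posterior predictive density is $p(\bar x\mid(x,u),\mathcal{D})=\int_{\mathbb{R}^{n_w}}\mathcal{N}(\bar x\mid f^w(x,u),\sigma^2 I)\,p_{\mathbf{w}}(w\mid\mathcal{D})\,dw$, with $\mathcal{N}(\cdot\mid m,\sigma^2I)$ the Gaussian density on $\mathbb{R}^n$. Let $\mathcal{U}\subseteq\mathbb{R}^c$ be compact; a strategy is a sequence $\pi=(\pi_k)_k$ of measurable maps $\pi_k:\mathbb{R}^n\to\mathcal{U}$. Let $\mathrm{G},\mathrm{S}\subseteq\mathbb{R}^n$ be measurable, disjoint, and $N\in\mathbb{N}$. Value functions: $V^\pi_N(x)=\mathbf{1}_{\mathrm{G}}(x)$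 and for $0\le k<N$, $V^\pi_k(x)=\mathbf{1}_{\mathrm{G}}(x)+\mathbf{1}_{\mathrm{S}}(x)\int_{\mathbb{R}^n}V^\pi_{k+1}(\bar x)\,p(\bar x\mid(x,\pi_k(x)),\mathcal{D})\,d\bar x$, for $x\in\mathbb{R}^n$. Abstraction: $Q=\{q_1,\dots,q_{n_q}\}$ is a partition of $\mathrm{S}\cup\mathrm{G}$ into measurable cells, each cell contained either in $\mathrm{G}$ or in $\mathrm{S}$; $z:\mathrm{S}\cup\mathrm{G}\to Q$ maps a state to the cell containing it. For $q\in Q$, $\mathbf{1}_{\mathrm{G}}(q)=1$ if $q\subseteq\mathrm{G}$ and $0$ otherwise; similarly $\mathbf{1}_{\mathrm{S}}(q)$. For a function $K:Q\to[0,1]$ write $\tilde K(\bar x)=K(z(\bar x))$ if $\bar x\in\mathrm{S}\cup\mathrm{G}$ and $\tilde K(\bar x)=0$ otherwise. Noise truncation: $\eta\in(0,1)$ and $\epsilon=\sqrt{2\sigma^2}\,\mathrm{erf}^{-1}(\eta)$, so that a scalar $\mathcal{N}(0,\sigma^2)$ variable lies in $[-\epsilon,\epsilon]$ with probability $\eta$. Discretised lower bounds: $K^\pi_N(q)=\mathbf{1}_{\mathrm{G}}(q)$ and for $0\le k<N$ $$K^\pi_k(q)=\mathbf{1}_{\mathrm{G}}(q)+\mathbf{1}_{\mathrm{S}}(q)\sum_{i=1}^{n_p}v_{i-1}\,R(q,k,\pi,i),\qquad R(q,k,\pi,i)=\eta^n\int_{H^{q,\pi,\epsilon}_{k,i}}p_{\mathbf{w}}(w\mid\mathcal{D})\,dw,$$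 where the projecting weight set is $$H^{q,\pi,\epsilon}_{k,i}=\big\{w\in\mathbb{R}^{n_w}:\ \forall x\in q,\ \forall\gamma\in[-\epsilon,\epsilon]^n,\ v_{i-1}\le \tilde K^\pi_{k+1}\big(f^w(x,\pi_k(x))+\gamma\big)\le v_i\big\}$$ (assumed measurable). *)

theory Defs
  imports "HOL-Probability.Probability"
begin

definition erf :: "real \<Rightarrow> real" where
  "erf x = 2 / sqrt pi * (LBINT t=0..x. exp (- (t ^ 2)))"

definition erf_inv :: "real \<Rightarrow> real" where
  "erf_inv y = (THE x. erf x = y)"

definition trunc_eps :: "real \<Rightarrow> real \<Rightarrow> real" where
  "trunc_eps \<sigma> \<eta> = sqrt (2 * \<sigma>\<^sup>2) * erf_inv \<eta>"

definition gauss_density :: "real \<Rightarrow> real^'n \<Rightarrow> real^'n \<Rightarrow> real" where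
  "gauss_density \<sigma> m y = (\<Prod>i\<in>UNIV. normal_density (m $ i) \<sigma> (y $ i))"

definition post_pred ::
  "(real^'w \<Rightarrow> real^'n \<Rightarrow> real^'c \<Rightarrow> real^'n) \<Rightarrow> (real^'w \<Rightarrow> real) \<Rightarrow> real
   \<Rightarrow> real^'n \<Rightarrow> real^'c \<Rightarrow> real^'n \<Rightarrow> real" where
  "post_pred f p \<sigma> x u y = (LINT w|lborel. gauss_density \<sigma> (f w x u) y * p w)"

(* Vrec ... N m = V_{N-m} *)
primrec Vrec ::
  "(real^'w \<Rightarrow> real^'n \<Rightarrow> real^'c \<Rightarrow> real^'n) \<Rightarrow> (real^'w \<Rightarrow> real) \<Rightarrow> real
   \<Rightarrow> (nat \<Rightarrow> real^'n \<Rightarrow> real^'c) \<Rightarrow> (real^'n) set \<Rightarrow> (real^'n) set \<Rightarrow> nat \<Rightarrow> nat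
   \<Rightarrow> real^'n \<Rightarrow> real" where
  "Vrec f p \<sigma> \<pi> G S N 0 x = indicator G x"
| "Vrec f p \<sigma> \<pi> G S N (Suc m) x =
     indicator G x + indicator S x *
       (LINT y|lborel. Vrec f p \<sigma> \<pi> G S N m y * post_pred f p \<sigma> x (\<pi> (N - Suc m) x) y)"

definition Vfun ::
  "(real^'w \<Rightarrow> real^'n \<Rightarrow> real^'c \<Rightarrow> real^'n) \<Rightarrow> (real^'w \<Rightarrow> real) \<Rightarrow> real
   \<Rightarrow> (nat \<Rightarrow> real^'n \<Rightarrow> real^'c) \<Rightarrow> (real^'n) set \<Rightarrow> (real^'n) set \<Rightarrow> nat \<Rightarrow> nat
   \<Rightarrow> real^'n \<Rightarrow> real" where
  "Vfun f p \<sigma> \<pi> G S N k x = Vrec f p \<sigma> \<pi> G S N (N - k) x"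

definition cell_ind :: "'a set \<Rightarrow> 'a set \<Rightarrow> real" where
  "cell_ind A q = (if q \<subseteq> A then 1 else 0)"

definition zcell :: "'a set set \<Rightarrow> 'a \<Rightarrow> 'a set" where
  "zcell Q x = (THE q. q \<in> Q \<and> x \<in> q)"

definition Ktilde :: "'a set set \<Rightarrow> 'a set \<Rightarrow> 'a set \<Rightarrow> ('a set \<Rightarrow> real) \<Rightarrow> 'a \<Rightarrow> real" where
  "Ktilde Q S G K y = (if y \<in> S \<union> G then K (zcell Q y) else 0)"

(* projecting weight set H^{q,pi,eps}_{k,i}, where Knext = K^pi_{k+1} *)
definition Hset ::
  "(real^'w \<Rightarrow> real^'n \<Rightarrow> real^'c \<Rightarrow> real^'n) \<Rightarrow> (nat \<Rightarrow> real^'n \<Rightarrow> real^'c)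
   \<Rightarrow> (real^'n) set set \<Rightarrow> (real^'n) set \<Rightarrow> (real^'n) set \<Rightarrow> real \<Rightarrow> (nat \<Rightarrow> real)
   \<Rightarrow> ((real^'n) set \<Rightarrow> real) \<Rightarrow> nat \<Rightarrow> (real^'n) set \<Rightarrow> nat \<Rightarrow> (real^'w) set" where
  "Hset f \<pi> Q S G \<epsilon> v Knext k q i =
     {w. \<forall>x\<in>q. \<forall>\<gamma>::real^'n. (\<forall>j. \<bar>\<gamma> $ j\<bar> \<le> \<epsilon>) \<longrightarrow>
           v (i - 1) \<le> Ktilde Q S G Knext (f w x (\<pi> k x) + \<gamma>)
         \<and> Ktilde Q S G Knext (f w x (\<pi> k x) + \<gamma>) \<le> v i}"

(* Krec ... N m = K^pi_{N-m} *)
primrec Krec ::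
  "(real^'w \<Rightarrow> real^'n \<Rightarrow> real^'c \<Rightarrow> real^'n) \<Rightarrow> (real^'w \<Rightarrow> real) \<Rightarrow> (nat \<Rightarrow> real^'n \<Rightarrow> real^'c)
   \<Rightarrow> (real^'n) set set \<Rightarrow> (real^'n) set \<Rightarrow> (real^'n) set \<Rightarrow> real \<Rightarrow> real \<Rightarrow> (nat \<Rightarrow> real) \<Rightarrow> nat
   \<Rightarrow> nat \<Rightarrow> nat \<Rightarrow> (real^'n) set \<Rightarrow> real" where
  "Krec f p \<pi> Q S G \<epsilon> \<eta> v np N 0 q = cell_ind G q"
| "Krec f p \<pi> Q S G \<epsilon> \<eta> v np N (Suc m) q =
     cell_ind G q + cell_ind S q *
       (\<Sum>i=1..np. v (i - 1) *
          (\<eta> ^ CARD('n) *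
           (LINT w:Hset f \<pi> Q S G \<epsilon> v (Krec f p \<pi> Q S G \<epsilon> \<eta> v np N m) (N - Suc m) q i|lborel. p w)))"

definition Kfun ::
  "(real^'w \<Rightarrow> real^'n \<Rightarrow> real^'c \<Rightarrow> real^'n) \<Rightarrow> (real^'w \<Rightarrow> real) \<Rightarrow> (nat \<Rightarrow> real^'n \<Rightarrow> real^'c)
   \<Rightarrow> (real^'n) set set \<Rightarrow> (real^'n) set \<Rightarrow> (real^'n) set \<Rightarrow> real \<Rightarrow> real \<Rightarrow> (nat \<Rightarrow> real) \<Rightarrow> nat
   \<Rightarrow> nat \<Rightarrow> nat \<Rightarrow> (real^'n) set \<Rightarrow> real" where
  "Kfun f p \<pi> Q S G \<epsilon> \<eta> v np N k q = Krec f p \<pi> Q S G \<epsilon> \<eta> v np N (N - k) q"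

end

theory Submission
  imports Defs
begin

lemma nn_integral_vec_prod:
  fixes g :: "'n::finite \<Rightarrow> real \<Rightarrow> real"
  assumes [measurable]: "\<And>i. g i \<in> borel_measurable borel"
    and nn: "\<And>i t. 0 \<le> g i t"
  shows "(\<integral>\<^sup>+y. (\<Prod>i\<in>UNIV. g i (y $ i)) \<partial>(lborel::(real^'n) measure)) = (\<Prod>i\<in>UNIV. (\<integral>\<^sup>+t. g i t \<partial>lborel))"
proof -
  define h where "h b = g (SOME i. b = axis i (1::real))" for b :: "real^'n"
  have hax: "h (axis i 1) = g i" for i
  proof -
    have "(SOME j. axis i (1::real) = axis j 1) = i"
      by (rule some_equality) (auto simp: axis_eq_axis)
    then show ?thesis by (simp add: h_def)
  qed
  have B: "(Basis :: (real^'n) set) = (\<lambda>i. axis i 1) ` UNIV"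
    by (auto simp: Basis_vec_def)
  have inj: "inj (\<lambda>i::'n. axis i (1::real))"
    by (auto intro!: injI simp: axis_eq_axis)
  have "(\<integral>\<^sup>+y. (\<Prod>i\<in>UNIV. g i (y $ i)) \<partial>(lborel::(real^'n) measure)) =
        (\<integral>\<^sup>+y. (\<Prod>b\<in>Basis. h b (y \<bullet> b)) \<partial>(lborel::(real^'n) measure))"
    by (simp add: B prod.reindex[OF inj] hax inner_axis)
  also have "\<dots> = (\<integral>\<^sup>+y. (\<Prod>b\<in>Basis. ennreal (h b (y \<bullet> b))) \<partial>(lborel::(real^'n) measure))"
  proof -
    have "\<And>b t. b \<in> Basis \<Longrightarrow> 0 \<le> h b t" by (auto simp: B hax nn)
    then show ?thesis by (intro nn_integral_cong) (simp add: prod_ennreal)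
  qed
  also have "\<dots> = (\<Prod>b\<in>Basis. (\<integral>\<^sup>+t. h b t \<partial>lborel))"
    by (rule nn_integral_lborel_prod) (auto simp: B hax nn)
  also have "\<dots> = (\<Prod>i\<in>UNIV. (\<integral>\<^sup>+t. g i t \<partial>lborel))"
    by (simp add: B prod.reindex[OF inj] hax)
  finally show ?thesis .
qed

definition FF :: "real \<Rightarrow> real" where "FF x = integral {0..x} (\<lambda>t. exp (- (t ^ 2)))"

lemma cont_gauss: "continuous_on A (\<lambda>t::real. exp (- (t ^ 2)))"
  by (intro continuous_intros)

lemma LBINT_eq_int: "a \<le> b \<Longrightarrow> (LBINT t=ereal a..ereal b. exp (- (t ^ 2))) = integral {a..b} (\<lambda>t. exp (- (t ^ 2)))"
  by (rule interval_integral_eq_integral) (auto intro!: borel_integrable_atLeastAtMost' cont_gauss)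

lemma erf_pos_eq: "0 \<le> x \<Longrightarrow> erf x = 2 / sqrt pi * FF x"
  unfolding erf_def FF_def using LBINT_eq_int[of 0 x] by (simp add: zero_ereal_def)

lemma erf_nonpos: "x \<le> 0 \<Longrightarrow> erf x \<le> 0"
proof -
  assume x: "x \<le> 0"
  have "(LBINT t=0..x. exp (- (t ^ 2))) = - (LBINT t=x..0. exp (- (t ^ 2)))"
    by (rule interval_integral_endpoints_reverse)
  also have "(LBINT t=x..0. exp (- (t ^ 2))) = integral {x..0} (\<lambda>t. exp (- (t ^ 2)))"
    using x LBINT_eq_int[of x 0] by (simp add: zero_ereal_def)
  also have "integral {x..0} (\<lambda>t. exp (- (t ^ 2))) \<ge> 0"
    by (intro integral_nonneg integrable_continuous_interval cont_gauss) auto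
  ultimately show ?thesis unfolding erf_def by (simp add: mult_nonneg_nonpos)
qed

lemma FF_cont: "continuous_on {0..b} FF"
  unfolding FF_def by (intro indefinite_integral_continuous_1 integrable_continuous_interval cont_gauss)

lemma FF_strict: "0 \<le> x \<Longrightarrow> x < y \<Longrightarrow> FF x < FF y"
proof -
  assume x: "0 \<le> x" and xy: "x < y"
  have D: "\<exists>d. (FF has_real_derivative d) (at z) \<and> d > 0" if z: "x < z" "z < y" for z
  proof -
    have "(FF has_real_derivative exp (- (z ^ 2))) (at z within {0..y})"
      unfolding FF_def apply (rule integral_has_real_derivative[OF cont_gauss]) using x z by simp
    moreover have "at z within {0..y} = at z"
      apply (rule at_within_interior) using x z by simp
    ultimately have "(FF has_real_derivative exp (- (z ^ 2))) (at z)"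
      by simp
    then show ?thesis by (intro exI conjI) auto
  qed
  have C: "continuous_on {x..y} FF" apply (rule continuous_on_subset[OF FF_cont[of y]]) using x by auto
  show ?thesis by (rule DERIV_pos_imp_increasing_open[OF xy D C])
qed

lemma FF_lim: "(FF \<longlongrightarrow> sqrt pi / 2) at_top"
proof -
  have hb: "has_bochner_integral lborel (\<lambda>x. indicator {0..} x *\<^sub>R exp (- x\<^sup>2)) (sqrt pi / 2)"
    by (rule gaussian_moment_0)
  have si: "set_integrable lborel {0::real..} (\<lambda>t. exp (- (t ^ 2)))"
    using integrable.intros[OF hb] unfolding set_integrable_def by simp
  have val: "set_lebesgue_integral lborel {0::real..} (\<lambda>t. exp (- (t ^ 2))) = sqrt pi / 2"
    using has_bochner_integral_integral_eq[OF hb] unfolding set_lebesgue_integral_def by simp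
  have L: "((\<lambda>b. set_lebesgue_integral lborel {0..b} (\<lambda>t. exp (- (t ^ 2)))) \<longlongrightarrow> sqrt pi / 2) at_top"
    using tendsto_set_lebesgue_integral_at_top[OF _ si] val by simp
  have E: "\<forall>\<^sub>F b in at_top. set_lebesgue_integral lborel {0..b} (\<lambda>t. exp (- (t ^ 2))) = FF b"
    using eventually_ge_at_top[of "0::real"]
    by eventually_elim (auto simp: FF_def intro!: set_borel_integral_eq_integral borel_integrable_atLeastAtMost' cont_gauss)
  show ?thesis using L tendsto_cong[OF E] by simp
qed

lemma erf_inv_prop:
  assumes "0 < \<eta>" "\<eta> < 1"
  shows "erf_inv \<eta> > 0 \<and> erf (erf_inv \<eta>) = \<eta>"
proof -
  define c where "c = \<eta> * sqrt pi / 2"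
  have c: "0 < c" "c < sqrt pi / 2" using assms by (auto simp: c_def)
  have "\<forall>\<^sub>F b in at_top. FF b > c" using order_tendstoD(1)[OF FF_lim c(2)] .
  moreover have "\<forall>\<^sub>F b in at_top. b \<ge> (0::real)" by (rule eventually_ge_at_top)
  ultimately have "\<forall>\<^sub>F b in at_top. FF b > c \<and> b \<ge> 0" by eventually_elim auto
  then obtain b where b: "FF b > c" "b \<ge> 0" using eventually_happens'[OF trivial_limit_at_top_linorder] by blast
  have F0: "FF 0 = 0" by (simp add: FF_def)
  obtain a where a: "0 \<le> a" "a \<le> b" "FF a = c"
    using IVT'[of FF 0 c b] F0 c b FF_cont by fastforce
  have a0: "a > 0" using a F0 c by (cases "a = 0") auto
  have ea: "erf a = \<eta>" using erf_pos_eq[of a] a c_def by simp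
  have uniq: "x = a" if "erf x = \<eta>" for x
  proof -
    have "x > 0" using erf_nonpos[of x] that assms by force
    then have "FF x = c" using erf_pos_eq[of x] that c_def by (simp add: field_simps)
    then show ?thesis using FF_strict[of x a] FF_strict[of a x] a \<open>x > 0\<close>
      by (cases x a rule: linorder_cases) auto
  qed
  have "erf_inv \<eta> = a" unfolding erf_inv_def using ea uniq by (rule the_equality)
  then show ?thesis using a0 ea by simp
qed

lemma box1:
  assumes s: "\<sigma> > 0" and e: "0 < \<eta>" "\<eta> < 1"
  shows "(\<integral>\<^sup>+t. ennreal (indicator {\<mu> - trunc_eps \<sigma> \<eta> .. \<mu> + trunc_eps \<sigma> \<eta>} t * normal_density \<mu> \<sigma> t) \<partial>lborel) = ennreal \<eta>"
proof -
  define a where "a = erf_inv \<eta>"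
  define c where "c = sqrt (2 * \<sigma>\<^sup>2)"
  have a: "a > 0" "erf a = \<eta>" using erf_inv_prop[OF e] a_def by auto
  have c: "c > 0" using s by (simp add: c_def)
  have eps: "trunc_eps \<sigma> \<eta> = c * a" by (simp add: trunc_eps_def c_def a_def)
  define h where "h s = exp (- (s ^ 2)) / sqrt pi" for s :: real
  have pt: "ennreal c * ennreal (indicator {\<mu> - c * a .. \<mu> + c * a} (\<mu> + c * s) * normal_density \<mu> \<sigma> (\<mu> + c * s))
        = ennreal (indicator {-a..a} s * h s)" for s
  proof -
    have i: "indicator {\<mu> - c * a .. \<mu> + c * a} (\<mu> + c * s) = (indicator {-a..a} s :: real)"
    proof -
      have 1: "(\<mu> - c * a \<le> \<mu> + c * s) = (-a \<le> s)"
        using c mult_le_cancel_left_pos[of c "-a" s] by (smt (verit) mult_minus_right)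
      have 2: "(c * s \<le> c * a) = (s \<le> a)"
        using c mult_le_cancel_left_pos[of c s a] by simp
      show ?thesis by (simp add: indicator_def 1 2)
    qed
    have c2: "c\<^sup>2 = 2 * \<sigma>\<^sup>2" using c_def by simp
    have sq: "sqrt (2 * pi * \<sigma>\<^sup>2) = sqrt pi * c" by (simp add: c_def real_sqrt_mult[symmetric] ac_simps)
    have cn: "c * normal_density \<mu> \<sigma> (\<mu> + c * s) = h s"
      unfolding normal_density_def h_def sq using s c
      by (simp add: power_mult_distrib c2 field_simps)
    have "c * (indicator {\<mu> - c * a .. \<mu> + c * a} (\<mu> + c * s) * normal_density \<mu> \<sigma> (\<mu> + c * s))
       = indicator {-a..a} s * h s" unfolding i cn[symmetric] by simp
    moreover have "ennreal c * ennreal (indicator {\<mu> - c * a .. \<mu> + c * a} (\<mu> + c * s) * normal_density \<mu> \<sigma> (\<mu> + c * s))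
       = ennreal (c * (indicator {\<mu> - c * a .. \<mu> + c * a} (\<mu> + c * s) * normal_density \<mu> \<sigma> (\<mu> + c * s)))"
      using c by (intro ennreal_mult[symmetric]) auto
    ultimately show ?thesis by simp
  qed
  have "(\<integral>\<^sup>+t. ennreal (indicator {\<mu> - trunc_eps \<sigma> \<eta> .. \<mu> + trunc_eps \<sigma> \<eta>} t * normal_density \<mu> \<sigma> t) \<partial>lborel)
     = ennreal \<bar>c\<bar> * (\<integral>\<^sup>+s. ennreal (indicator {\<mu> - c * a .. \<mu> + c * a} (\<mu> + c * s) * normal_density \<mu> \<sigma> (\<mu> + c * s)) \<partial>lborel)"
    unfolding eps by (rule nn_integral_real_affine) (use c in auto)
  also have "\<dots> = (\<integral>\<^sup>+s. ennreal (indicator {-a..a} s * h s) \<partial>lborel)"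
    using c by (simp add: nn_integral_cmult[symmetric] pt)
  also have "\<dots> = ennreal \<eta>"
  proof (rule nn_integral_has_integral_lborel)
    show "(\<lambda>s. indicator {-a..a} s * h s) \<in> borel_measurable borel" unfolding h_def by measurable
    show "\<And>s. 0 \<le> indicator {-a..a} s * h s" by (simp add: h_def)
    have hc: "continuous_on A h" for A unfolding h_def by (intro continuous_intros) auto
    have "integral {-a..a} h = integral {-a..0} h + integral {0..a} h"
      using a Henstock_Kurzweil_Integration.integral_combine[where a="-a" and c=0 and b=a and f=h, OF _ _ integrable_continuous_interval[OF hc]] by simp
    also have "integral {-a..0} h = integral {0..a} h"
    proof -
      have hn: "(\<lambda>x. h (-x)) = h" by (auto simp: h_def)
      show ?thesis using Henstock_Kurzweil_Integration.integral_reflect_real[of a 0 h] by (simp add: hn)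
    qed
    also have "integral {0..a} h = FF a / sqrt pi"
      unfolding FF_def h_def by (simp add: integral_divide)
    finally have "integral {-a..a} h = \<eta>" using erf_pos_eq[of a] a by simp
    then have "(h has_integral \<eta>) {-a..a}"
      using integrable_continuous_interval[OF hc] by (metis integrable_integral)
    then show "((\<lambda>s. indicator {-a..a} s * h s) has_integral \<eta>) UNIV"
    proof -
      have eq: "(\<lambda>s. indicator {-a..a} s * h s) = (\<lambda>x. if x \<in> {-a..a} then h x else 0)"
        by (auto simp: indicator_def fun_eq_iff)
      show ?thesis unfolding eq has_integral_restrict_UNIV by fact
    qed
  qed
  finally show ?thesis .
qed

lemma vec_nth_meas[measurable]: "(\<lambda>x::real^'n. x $ i) \<in> borel_measurable borel"
  by (intro borel_measurable_continuous_onI continuous_intros)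

lemma gauss_meas: "\<sigma> > 0 \<Longrightarrow> (\<lambda>(m, y). gauss_density \<sigma> m y) \<in> borel_measurable borel"
proof -
  assume that: "\<sigma> > 0"
  have "continuous_on UNIV (\<lambda>p::((real^'n) \<times> (real^'n)). \<Prod>i\<in>UNIV. normal_density (fst p $ i) \<sigma> (snd p $ i))"
    unfolding normal_density_def using that by (intro continuous_intros) auto
  then have "(\<lambda>p::((real^'n) \<times> (real^'n)). \<Prod>i\<in>UNIV. normal_density (fst p $ i) \<sigma> (snd p $ i)) \<in> borel_measurable borel"
    by (rule borel_measurable_continuous_onI)
  then show ?thesis unfolding gauss_density_def by (simp add: split_beta')
qed

lemma gauss_nonneg: "0 \<le> gauss_density \<sigma> m y"
  unfolding gauss_density_def by (intro prod_nonneg) auto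

lemma nd_le: "normal_density \<mu> \<sigma> t \<le> 1 / sqrt (2 * pi * \<sigma>\<^sup>2)"
  unfolding normal_density_def by (intro mult_left_le) auto

lemma gauss_le: "gauss_density \<sigma> (m::real^'n) y \<le> (1 / sqrt (2 * pi * \<sigma>\<^sup>2)) ^ CARD('n)"
proof -
  have "gauss_density \<sigma> m y \<le> (\<Prod>i\<in>(UNIV::'n set). 1 / sqrt (2 * pi * \<sigma>\<^sup>2))"
    unfolding gauss_density_def by (intro prod_mono) (auto intro: nd_le)
  then show ?thesis by simp
qed

lemma gauss_int: "\<sigma> > 0 \<Longrightarrow> (\<integral>\<^sup>+y. gauss_density \<sigma> (m::real^'n) y \<partial>lborel) = 1"
proof -
  assume s: "\<sigma> > 0"
  have 1: "(\<integral>\<^sup>+t. normal_density \<mu> \<sigma> t \<partial>lborel) = 1" for \<mu>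
    using s by (subst nn_integral_eq_integral) (auto simp: integrable_normal_density[OF s] integral_normal_density[OF s])
  show ?thesis unfolding gauss_density_def
    by (subst nn_integral_vec_prod) (auto simp: 1)
qed

lemma gauss_box:
  assumes "\<sigma> > 0" "0 < \<eta>" "\<eta> < 1"
  shows "(\<integral>\<^sup>+y. ennreal (indicator {y. \<forall>j. \<bar>y $ j - m $ j\<bar> \<le> trunc_eps \<sigma> \<eta>} y * gauss_density \<sigma> (m::real^'n) y) \<partial>lborel)
     = ennreal (\<eta> ^ CARD('n))"
proof -
  define e where "e = trunc_eps \<sigma> \<eta>"
  have pt: "indicator {y. \<forall>j. \<bar>y $ j - m $ j\<bar> \<le> e} y * gauss_density \<sigma> m y
      = (\<Prod>i\<in>UNIV. indicator {m $ i - e .. m $ i + e} (y $ i) * normal_density (m $ i) \<sigma> (y $ i))" for y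
  proof (cases "\<forall>j. \<bar>y $ j - m $ j\<bar> \<le> e")
    case True
    have "indicator {m $ i - e .. m $ i + e} (y $ i) = (1::real)" for i
    proof -
      have "\<bar>y $ i - m $ i\<bar> \<le> e" using True by blast
      then show ?thesis by (auto simp: indicator_def abs_le_iff)
    qed
    then show ?thesis using True by (simp add: gauss_density_def)
  next
    case False
    then obtain j where j: "\<bar>y $ j - m $ j\<bar> > e" by (auto simp: not_le)
    then have "indicator {m $ j - e .. m $ j + e} (y $ j) = (0::real)"
      by (auto simp: indicator_def abs_le_iff)
    then have "(\<Prod>i\<in>UNIV. indicator {m $ i - e .. m $ i + e} (y $ i) * normal_density (m $ i) \<sigma> (y $ i)) = 0"
      by (intro prod_zero) (auto intro!: bexI[of _ j])
    then show ?thesis using False by simp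
  qed
  have "(\<integral>\<^sup>+y. ennreal (indicator {y. \<forall>j. \<bar>y $ j - m $ j\<bar> \<le> e} y * gauss_density \<sigma> m y) \<partial>lborel)
     = (\<integral>\<^sup>+y. ennreal (\<Prod>i\<in>UNIV. indicator {m $ i - e .. m $ i + e} (y $ i) * normal_density (m $ i) \<sigma> (y $ i)) \<partial>lborel)"
    by (simp add: pt)
  also have "\<dots> = (\<Prod>i\<in>UNIV. (\<integral>\<^sup>+t. ennreal (indicator {m $ i - e .. m $ i + e} t * normal_density (m $ i) \<sigma> t) \<partial>lborel))"
    by (rule nn_integral_vec_prod) auto
  also have "\<dots> = (\<Prod>i\<in>(UNIV::'n set). ennreal \<eta>)"
    unfolding e_def using box1[OF assms] by simp
  also have "\<dots> = ennreal (\<eta> ^ CARD('n))"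
    using assms by (simp add: ennreal_power)
  finally show ?thesis unfolding e_def .
qed

lemma pp_meas:
  fixes f :: "real^'w \<Rightarrow> real^'n \<Rightarrow> real^'c \<Rightarrow> real^'n" and pk :: "real^'n \<Rightarrow> real^'c"
  assumes f_meas: "(\<lambda>(w, x, u). f w x u) \<in> borel_measurable borel"
    and p_meas: "p \<in> borel_measurable lborel"
    and pk: "pk \<in> borel_measurable borel"
    and s: "\<sigma> > 0"
  shows "(\<lambda>(x, y). post_pred f p \<sigma> x (pk x) y) \<in> borel_measurable borel"
proof -
  have g: "(\<lambda>(m, y). gauss_density \<sigma> m (y::real^'n)) \<in> borel_measurable (borel \<Otimes>\<^sub>M borel)"
    using gauss_meas[OF s] by (simp add: borel_prod)
  have f': "(\<lambda>(w, x, u). f w x u) \<in> borel_measurable (borel \<Otimes>\<^sub>M (borel \<Otimes>\<^sub>M borel))"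
    using f_meas by (simp add: borel_prod)
  have [measurable]: "p \<in> borel_measurable borel" using p_meas by simp
  note [measurable] = pk
  have "(\<lambda>z::(((real^'n) \<times> (real^'n)) \<times> (real^'w)). gauss_density \<sigma> (f (snd z) (fst (fst z)) (pk (fst (fst z)))) (snd (fst z)) * p (snd z))
        \<in> borel_measurable ((borel \<Otimes>\<^sub>M borel) \<Otimes>\<^sub>M borel)"
  proof -
    have m1: "(\<lambda>z::(((real^'n) \<times> (real^'n)) \<times> (real^'w)). (snd z, fst (fst z), pk (fst (fst z)))) \<in> measurable ((borel \<Otimes>\<^sub>M borel) \<Otimes>\<^sub>M borel) (borel \<Otimes>\<^sub>M (borel \<Otimes>\<^sub>M borel))"
      by measurable
    have m2: "(\<lambda>z::(((real^'n) \<times> (real^'n)) \<times> (real^'w)). f (snd z) (fst (fst z)) (pk (fst (fst z)))) \<in> borel_measurable ((borel \<Otimes>\<^sub>M borel) \<Otimes>\<^sub>M borel)"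
      using measurable_comp[OF m1 f'] by (simp add: comp_def)
    have m3: "(\<lambda>z::(((real^'n) \<times> (real^'n)) \<times> (real^'w)). (f (snd z) (fst (fst z)) (pk (fst (fst z))), snd (fst z))) \<in> measurable ((borel \<Otimes>\<^sub>M borel) \<Otimes>\<^sub>M borel) (borel \<Otimes>\<^sub>M borel)"
      using m2 by measurable
    have m4: "(\<lambda>z::(((real^'n) \<times> (real^'n)) \<times> (real^'w)). gauss_density \<sigma> (f (snd z) (fst (fst z)) (pk (fst (fst z)))) (snd (fst z))) \<in> borel_measurable ((borel \<Otimes>\<^sub>M borel) \<Otimes>\<^sub>M borel)"
      using measurable_comp[OF m3 g] by (simp add: comp_def)
    show ?thesis using m4 by measurable
  qed
  then have "(\<lambda>z::(((real^'n) \<times> (real^'n)) \<times> (real^'w)). gauss_density \<sigma> (f (snd z) (fst (fst z)) (pk (fst (fst z)))) (snd (fst z)) * p (snd z))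
        \<in> borel_measurable (lborel \<Otimes>\<^sub>M lborel)"
    by (simp add: borel_prod lborel_prod)
  then have "(\<lambda>xy::((real^'n) \<times> (real^'n)). LINT w|lborel. gauss_density \<sigma> (f w (fst xy) (pk (fst xy))) (snd xy) * p w) \<in> borel_measurable lborel"
    by (intro lborel.borel_measurable_lebesgue_integral) (simp add: split_beta')
  then show ?thesis unfolding post_pred_def by (simp add: split_beta')
qed

lemma joint_meas:
  fixes f :: "real^'w \<Rightarrow> real^'n \<Rightarrow> real^'c \<Rightarrow> real^'n"
  assumes f_meas: "(\<lambda>(w, x, u). f w x u) \<in> borel_measurable borel"
    and p_meas: "p \<in> borel_measurable lborel"
    and V_meas: "V \<in> borel_measurable borel"
    and s: "\<sigma> > 0"
  shows "(\<lambda>z::((real^'n) \<times> (real^'w)). V (fst z) * gauss_density \<sigma> (f (snd z) x u) (fst z) * p (snd z)) \<in> borel_measurable (lborel \<Otimes>\<^sub>M lborel)"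
proof -
  have g: "(\<lambda>(m, y). gauss_density \<sigma> m (y::real^'n)) \<in> borel_measurable (borel \<Otimes>\<^sub>M borel)"
    using gauss_meas[OF s] by (simp add: borel_prod)
  have f': "(\<lambda>(w, x, u). f w x u) \<in> borel_measurable (borel \<Otimes>\<^sub>M (borel \<Otimes>\<^sub>M borel))"
    using f_meas by (simp add: borel_prod)
  have [measurable]: "p \<in> borel_measurable borel" using p_meas by simp
  note [measurable] = V_meas
  have m1: "(\<lambda>z::((real^'n) \<times> (real^'w)). (snd z, x, u)) \<in> measurable (borel \<Otimes>\<^sub>M borel) (borel \<Otimes>\<^sub>M (borel \<Otimes>\<^sub>M borel))"
    by measurable
  have m2: "(\<lambda>z::((real^'n) \<times> (real^'w)). f (snd z) x u) \<in> borel_measurable (borel \<Otimes>\<^sub>M borel)"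
    using measurable_comp[OF m1 f'] by (simp add: comp_def)
  have m3: "(\<lambda>z::((real^'n) \<times> (real^'w)). (f (snd z) x u, fst z)) \<in> measurable (borel \<Otimes>\<^sub>M borel) (borel \<Otimes>\<^sub>M borel)"
    using m2 by measurable
  have m4: "(\<lambda>z::((real^'n) \<times> (real^'w)). gauss_density \<sigma> (f (snd z) x u) (fst z)) \<in> borel_measurable (borel \<Otimes>\<^sub>M borel)"
    using measurable_comp[OF m3 g] by (simp add: comp_def)
  have "(\<lambda>z::((real^'n) \<times> (real^'w)). V (fst z) * gauss_density \<sigma> (f (snd z) x u) (fst z) * p (snd z)) \<in> borel_measurable (borel \<Otimes>\<^sub>M borel)"
    using m4 by measurable
  then show ?thesis by (simp add: borel_prod lborel_prod)
qed

lemma step_integral: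
  fixes f :: "real^'w \<Rightarrow> real^'n \<Rightarrow> real^'c \<Rightarrow> real^'n"
  assumes f_meas: "(\<lambda>(w, x, u). f w x u) \<in> borel_measurable borel"
    and p_meas: "p \<in> borel_measurable lborel"
    and p_nonneg: "\<forall>w. 0 \<le> p w"
    and p_int: "(\<integral>\<^sup>+ w. ennreal (p w) \<partial>lborel) = 1"
    and V_meas: "V \<in> borel_measurable borel"
    and V_nn: "\<And>y. 0 \<le> V y" and V_le: "\<And>y. V y \<le> 1"
    and s: "\<sigma> > 0"
  shows "(LINT y|lborel. V y * post_pred f p \<sigma> x u y)
      = enn2real (\<integral>\<^sup>+w. ennreal (p w) * (\<integral>\<^sup>+y. ennreal (V y * gauss_density \<sigma> (f w x u) y) \<partial>lborel) \<partial>lborel)"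
    and "(\<integral>\<^sup>+w. ennreal (p w) * (\<integral>\<^sup>+y. ennreal (V y * gauss_density \<sigma> (f w x u) y) \<partial>lborel) \<partial>lborel) \<le> 1"
proof -
  define g where "g w y = gauss_density \<sigma> (f w x u) y" for w y
  define C where "C = (1 / sqrt (2 * pi * \<sigma>\<^sup>2)) ^ CARD('n)"
  have gnn: "0 \<le> g w y" for w y by (simp add: g_def gauss_nonneg)
  have gle: "g w y \<le> C" for w y by (simp add: g_def C_def gauss_le)
  have C0: "0 \<le> C" using gnn gle order_trans by blast
  have J: "(\<lambda>z::((real^'n) \<times> (real^'w)). V (fst z) * g (snd z) (fst z) * p (snd z)) \<in> borel_measurable (lborel \<Otimes>\<^sub>M lborel)"
    unfolding g_def by (rule joint_meas[OF f_meas p_meas V_meas s])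
  have J1: "(\<lambda>z::((real^'n) \<times> (real^'w)). g (snd z) (fst z) * p (snd z)) \<in> borel_measurable (lborel \<Otimes>\<^sub>M lborel)"
    using joint_meas[OF f_meas p_meas _ s, of "\<lambda>_. 1"] unfolding g_def by simp
  have Jw: "(\<lambda>w. V y * g w y * p w) \<in> borel_measurable lborel" for y
    using measurable_Pair2[OF J, of y] by simp
  have Jw1: "(\<lambda>w. g w y * p w) \<in> borel_measurable lborel" for y
    using measurable_Pair2[OF J1, of y] by simp
  have Jy: "(\<lambda>y. V y * g w y) \<in> borel_measurable lborel" for w
  proof -
    have "(\<lambda>z::((real^'n) \<times> (real^'w)). V (fst z) * g (snd z) (fst z) * 1) \<in> borel_measurable (lborel \<Otimes>\<^sub>M lborel)"
      unfolding g_def by (rule joint_meas[OF f_meas _ V_meas s]) simp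
    from measurable_Pair1[OF this, of w] show ?thesis by simp
  qed
  have qdef: "post_pred f p \<sigma> x u y = enn2real (\<integral>\<^sup>+w. ennreal (g w y * p w) \<partial>lborel)" for y
    unfolding post_pred_def g_def[symmetric]
    by (rule integral_eq_nn_integral) (use Jw1 gnn p_nonneg in auto)
  have fin: "(\<integral>\<^sup>+w. ennreal (g w y * p w) \<partial>lborel) \<le> ennreal C" for y
  proof -
    have "(\<integral>\<^sup>+w. ennreal (g w y * p w) \<partial>lborel) \<le> (\<integral>\<^sup>+w. ennreal C * ennreal (p w) \<partial>lborel)"
      using gle gnn p_nonneg C0 by (intro nn_integral_mono) (auto simp: ennreal_mult[symmetric] intro!: mult_right_mono)
    also have "\<dots> = ennreal C" using p_meas p_int by (simp add: nn_integral_cmult)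
    finally show ?thesis .
  qed
  have qe: "ennreal (post_pred f p \<sigma> x u y) = (\<integral>\<^sup>+w. ennreal (g w y * p w) \<partial>lborel)" for y
    unfolding qdef using fin[of y] by (intro ennreal_enn2real) (meson ennreal_less_top le_less_trans)
  have qnn: "0 \<le> post_pred f p \<sigma> x u y" for y by (simp add: qdef)
  have qm: "(\<lambda>y. post_pred f p \<sigma> x u y) \<in> borel_measurable lborel"
  proof -
    have "(\<lambda>(x, y). post_pred f p \<sigma> x ((\<lambda>_. u) x) y) \<in> borel_measurable borel"
      by (rule pp_meas[OF f_meas p_meas _ s]) simp
    then have "(\<lambda>(x, y). post_pred f p \<sigma> x u y) \<in> borel_measurable (lborel \<Otimes>\<^sub>M lborel)"
      by (simp add: lborel_prod)
    from measurable_Pair2[OF this, of x] show ?thesis by simp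
  qed
  have "(\<integral>\<^sup>+y. ennreal (V y * post_pred f p \<sigma> x u y) \<partial>lborel) = (\<integral>\<^sup>+y. ennreal (V y) * (\<integral>\<^sup>+w. ennreal (g w y * p w) \<partial>lborel) \<partial>lborel)"
    using V_nn qnn by (simp add: ennreal_mult qe)
  also have "\<dots> = (\<integral>\<^sup>+y. (\<integral>\<^sup>+w. ennreal (V y * g w y * p w) \<partial>lborel) \<partial>lborel)"
    using V_nn gnn p_nonneg Jw1
    by (intro nn_integral_cong) (simp add: nn_integral_cmult[symmetric] ennreal_mult[symmetric] mult.assoc)
  also have "\<dots> = (\<integral>\<^sup>+w. (\<integral>\<^sup>+y. ennreal (V y * g w y * p w) \<partial>lborel) \<partial>lborel)"
  proof -
    have Je: "(\<lambda>z::((real^'n) \<times> (real^'w)). ennreal (V (fst z) * g (snd z) (fst z) * p (snd z))) \<in> borel_measurable (lborel \<Otimes>\<^sub>M lborel)"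
      using J by measurable
    show ?thesis using lborel_pair.Fubini[OF Je] by simp
  qed
  also have "\<dots> = (\<integral>\<^sup>+w. ennreal (p w) * (\<integral>\<^sup>+y. ennreal (V y * g w y) \<partial>lborel) \<partial>lborel)"
    using V_nn gnn p_nonneg Jy
    by (intro nn_integral_cong) (simp add: nn_integral_cmult[symmetric] ennreal_mult[symmetric] mult_ac)
  finally have eq: "(\<integral>\<^sup>+y. ennreal (V y * post_pred f p \<sigma> x u y) \<partial>lborel) = (\<integral>\<^sup>+w. ennreal (p w) * (\<integral>\<^sup>+y. ennreal (V y * g w y) \<partial>lborel) \<partial>lborel)" .
  have le1: "(\<integral>\<^sup>+w. ennreal (p w) * (\<integral>\<^sup>+y. ennreal (V y * g w y) \<partial>lborel) \<partial>lborel) \<le> 1"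
  proof -
    have "(\<integral>\<^sup>+y. ennreal (V y * g w y) \<partial>lborel) \<le> 1" for w
    proof -
      have "(\<integral>\<^sup>+y. ennreal (V y * g w y) \<partial>lborel) \<le> (\<integral>\<^sup>+y. ennreal (g w y) \<partial>lborel)"
        using V_le gnn by (intro nn_integral_mono) (auto intro!: mult_left_le_one_le V_nn)
      also have "\<dots> = 1" unfolding g_def by (rule gauss_int[OF s])
      finally show ?thesis .
    qed
    then have "(\<integral>\<^sup>+w. ennreal (p w) * (\<integral>\<^sup>+y. ennreal (V y * g w y) \<partial>lborel) \<partial>lborel) \<le> (\<integral>\<^sup>+w. ennreal (p w) \<partial>lborel)"
      by (intro nn_integral_mono) (auto intro: mult_left_le)
    then show ?thesis using p_int by simp
  qed
  have "(LINT y|lborel. V y * post_pred f p \<sigma> x u y) = enn2real (\<integral>\<^sup>+y. ennreal (V y * post_pred f p \<sigma> x u y) \<partial>lborel)"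
    by (rule integral_eq_nn_integral) (use qm V_meas V_nn qnn in auto)
  then show "(LINT y|lborel. V y * post_pred f p \<sigma> x u y)
      = enn2real (\<integral>\<^sup>+w. ennreal (p w) * (\<integral>\<^sup>+y. ennreal (V y * gauss_density \<sigma> (f w x u) y) \<partial>lborel) \<partial>lborel)"
    using eq by (simp add: g_def)
  show "(\<integral>\<^sup>+w. ennreal (p w) * (\<integral>\<^sup>+y. ennreal (V y * gauss_density \<sigma> (f w x u) y) \<partial>lborel) \<partial>lborel) \<le> 1"
    using le1 by (simp add: g_def)
qed

lemma box_meas: "{y::real^'n. \<forall>j. \<bar>y $ j - m $ j\<bar> \<le> e} \<in> sets borel"
proof -
  have "closed {y::real^'n. \<forall>j. \<bar>y $ j - m $ j\<bar> \<le> e}"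
    by (intro closed_Collect_all closed_Collect_le continuous_intros)
  then show ?thesis by simp
qed

lemma lower_one:
  fixes m :: "real^'n"
  assumes s: "\<sigma> > 0" and e: "0 < \<eta>" "\<eta> < 1"
    and V_nn: "\<And>y. 0 \<le> V y" and c: "0 \<le> c"
    and Vc: "\<And>y. (\<forall>j. \<bar>y $ j - m $ j\<bar> \<le> trunc_eps \<sigma> \<eta>) \<Longrightarrow> c \<le> V y"
  shows "ennreal (c * \<eta> ^ CARD('n)) \<le> (\<integral>\<^sup>+y. ennreal (V y * gauss_density \<sigma> m y) \<partial>lborel)"
proof -
  define B where "B = {y::real^'n. \<forall>j. \<bar>y $ j - m $ j\<bar> \<le> trunc_eps \<sigma> \<eta>}"
  have gm: "(\<lambda>y. gauss_density \<sigma> m y) \<in> borel_measurable borel"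
  proof -
    have "(\<lambda>(m, y). gauss_density \<sigma> m (y::real^'n)) \<in> borel_measurable (lborel \<Otimes>\<^sub>M lborel)"
      using gauss_meas[OF s] by (simp add: lborel_prod)
    from measurable_Pair2[OF this, of m] show ?thesis by simp
  qed
  have Bm: "B \<in> sets borel" unfolding B_def by (rule box_meas)
  have mm: "(\<lambda>y. ennreal (indicator B y * gauss_density \<sigma> m y)) \<in> borel_measurable lborel"
    using gm Bm by measurable
  have "ennreal (c * \<eta> ^ CARD('n)) = ennreal c * (\<integral>\<^sup>+y. ennreal (indicator B y * gauss_density \<sigma> m y) \<partial>lborel)"
    unfolding B_def using gauss_box[OF s e, of m] c e by (simp add: ennreal_mult)
  also have "\<dots> = (\<integral>\<^sup>+y. ennreal c * ennreal (indicator B y * gauss_density \<sigma> m y) \<partial>lborel)"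
    by (rule nn_integral_cmult[symmetric]) (rule mm)
  also have "\<dots> \<le> (\<integral>\<^sup>+y. ennreal (V y * gauss_density \<sigma> m y) \<partial>lborel)"
  proof (intro nn_integral_mono)
    fix y
    have "c * (indicator B y * gauss_density \<sigma> m y) \<le> V y * gauss_density \<sigma> m y"
    proof (cases "y \<in> B")
      case True
      then have "c \<le> V y" using Vc unfolding B_def by blast
      then show ?thesis using True by (simp add: mult_right_mono gauss_nonneg)
    next
      case False
      then show ?thesis by (simp add: V_nn gauss_nonneg)
    qed
    then show "ennreal c * ennreal (indicator B y * gauss_density \<sigma> m y) \<le> ennreal (V y * gauss_density \<sigma> m y)"
    proof -
      have "ennreal c * ennreal (indicator B y * gauss_density \<sigma> m y) = ennreal (c * (indicator B y * gauss_density \<sigma> m y))"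
        using c by (intro ennreal_mult[symmetric]) (auto simp: gauss_nonneg)
      then show ?thesis using \<open>c * (indicator B y * gauss_density \<sigma> m y) \<le> V y * gauss_density \<sigma> m y\<close>
        by (simp add: ennreal_leI)
    qed
  qed
  finally show ?thesis .
qed

lemma lower_sum:
  fixes F :: "real^'w \<Rightarrow> real^'n" and Hs :: "nat \<Rightarrow> (real^'w) set"
  assumes s: "\<sigma> > 0" and e: "0 < \<eta>" "\<eta> < 1"
    and p_meas: "p \<in> borel_measurable lborel"
    and p_nonneg: "\<forall>w. 0 \<le> p w"
    and p_int: "(\<integral>\<^sup>+ w. ennreal (p w) \<partial>lborel) = 1"
    and V_nn: "\<And>y. 0 \<le> V y"
    and Hm: "\<forall>i\<in>{1..np}. Hs i \<in> sets lborel"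
    and Hd: "disjoint_family_on Hs {1..np}"
    and cnn: "\<forall>i\<in>{1..np}. 0 \<le> c i"
    and HV: "\<And>i w y. i \<in> {1..np} \<Longrightarrow> w \<in> Hs i \<Longrightarrow> (\<forall>j. \<bar>y $ j - F w $ j\<bar> \<le> trunc_eps \<sigma> \<eta>) \<Longrightarrow> c i \<le> V y"
  shows "ennreal (\<Sum>i=1..np. c i * (\<eta> ^ CARD('n) * (LINT w:Hs i|lborel. p w)))
     \<le> (\<integral>\<^sup>+w. ennreal (p w) * (\<integral>\<^sup>+y. ennreal (V y * gauss_density \<sigma> (F w) y) \<partial>lborel) \<partial>lborel)"
proof -
  define k where "k i = c i * \<eta> ^ CARD('n)" for i
  define I where "I w = (\<integral>\<^sup>+y. ennreal (V y * gauss_density \<sigma> (F w) y) \<partial>lborel)" for w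
  have knn: "0 \<le> k i" if "i \<in> {1..np}" for i using cnn that e by (simp add: k_def)
  have [measurable]: "p \<in> borel_measurable borel" using p_meas by simp
  have pint: "integrable lborel p"
    by (rule integrableI_nonneg) (use p_nonneg p_int in auto)
  have L: "ennreal (LINT w:Hs i|lborel. p w) = (\<integral>\<^sup>+w. ennreal (indicator (Hs i) w * p w) \<partial>lborel)"
     and Lnn: "0 \<le> (LINT w:Hs i|lborel. p w)" if i: "i \<in> {1..np}" for i
  proof -
    have hi: "integrable lborel (\<lambda>w. indicator (Hs i) w *\<^sub>R p w)"
      using Hm i pint by (intro integrable_mult_indicator) auto
    have "(\<integral>\<^sup>+w. ennreal (indicator (Hs i) w *\<^sub>R p w) \<partial>lborel) = ennreal (LINT w:Hs i|lborel. p w)"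
      unfolding set_lebesgue_integral_def
      by (rule nn_integral_eq_integral[OF hi]) (use p_nonneg in \<open>auto simp: indicator_def\<close>)
    then show "ennreal (LINT w:Hs i|lborel. p w) = (\<integral>\<^sup>+w. ennreal (indicator (Hs i) w * p w) \<partial>lborel)" by simp
    show "0 \<le> (LINT w:Hs i|lborel. p w)"
      unfolding set_lebesgue_integral_def using p_nonneg by (intro integral_nonneg_AE) (auto simp: indicator_def)
  qed
  have Hms: "Hs i \<in> sets borel" if "i \<in> {1..np}" for i using Hm that by simp
  have mi: "(\<lambda>w. ennreal (indicator (Hs i) w * p w)) \<in> borel_measurable lborel"
       "(\<lambda>w. ennreal (k i) * ennreal (indicator (Hs i) w * p w)) \<in> borel_measurable lborel"
    if "i \<in> {1..np}" for i
  proof -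
    have [measurable]: "Hs i \<in> sets lborel" using Hm that by auto
    show "(\<lambda>w. ennreal (indicator (Hs i) w * p w)) \<in> borel_measurable lborel" by measurable
    show "(\<lambda>w. ennreal (k i) * ennreal (indicator (Hs i) w * p w)) \<in> borel_measurable lborel" by measurable
  qed
  have "ennreal (\<Sum>i=1..np. c i * (\<eta> ^ CARD('n) * (LINT w:Hs i|lborel. p w)))
      = (\<Sum>i=1..np. ennreal (k i * (LINT w:Hs i|lborel. p w)))"
    using cnn e by (subst sum_ennreal) (auto simp: k_def mult.assoc intro!: mult_nonneg_nonneg knn Lnn)
  also have "\<dots> = (\<Sum>i=1..np. (\<integral>\<^sup>+w. ennreal (k i) * ennreal (indicator (Hs i) w * p w) \<partial>lborel))"
  proof (intro sum.cong refl)
    fix i assume i: "i \<in> {1..np}"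
    have "ennreal (k i * (LINT w:Hs i|lborel. p w)) = ennreal (k i) * ennreal (LINT w:Hs i|lborel. p w)"
      using knn[OF i] Lnn[OF i] by (rule ennreal_mult)
    also have "\<dots> = (\<integral>\<^sup>+w. ennreal (k i) * ennreal (indicator (Hs i) w * p w) \<partial>lborel)"
      unfolding L[OF i] using mi(1)[OF i] by (intro nn_integral_cmult[symmetric])
    finally show "ennreal (k i * (LINT w:Hs i|lborel. p w)) = (\<integral>\<^sup>+w. ennreal (k i) * ennreal (indicator (Hs i) w * p w) \<partial>lborel)" .
  qed
  also have "\<dots> = (\<integral>\<^sup>+w. (\<Sum>i=1..np. ennreal (k i) * ennreal (indicator (Hs i) w * p w)) \<partial>lborel)"
    using mi(2) by (intro nn_integral_sum[symmetric])
  also have "\<dots> \<le> (\<integral>\<^sup>+w. ennreal (p w) * I w \<partial>lborel)"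
  proof (intro nn_integral_mono)
    fix w
    show "(\<Sum>i=1..np. ennreal (k i) * ennreal (indicator (Hs i) w * p w)) \<le> ennreal (p w) * I w"
    proof (cases "\<exists>j\<in>{1..np}. w \<in> Hs j")
      case True
      then obtain j where j: "j \<in> {1..np}" "w \<in> Hs j" by blast
      have z: "ennreal (k i) * ennreal (indicator (Hs i) w * p w) = 0" if "i \<in> {1..np} - {j}" for i
      proof -
        have "w \<notin> Hs i" using Hd j that unfolding disjoint_family_on_def by blast
        then show ?thesis by simp
      qed
      have "(\<Sum>i=1..np. ennreal (k i) * ennreal (indicator (Hs i) w * p w)) = ennreal (k j) * ennreal (indicator (Hs j) w * p w)"
        using j z by (intro sum.remove[THEN trans]) (auto intro: sum.neutral)
      also have "\<dots> = ennreal (p w) * ennreal (k j)" using j by (simp add: mult.commute)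
      also have "\<dots> \<le> ennreal (p w) * I w"
      proof (intro mult_left_mono)
        show "ennreal (k j) \<le> I w" unfolding k_def I_def
          by (rule lower_one[OF s e V_nn]) (use cnn j HV in auto)
      qed simp
      finally show ?thesis .
    next
      case False
      then have "\<And>i. i \<in> {1..np} \<Longrightarrow> indicator (Hs i) w = (0::real)" by auto
      then have z0: "(\<Sum>i=1..np. ennreal (k i) * ennreal (indicator (Hs i) w * p w)) = 0"
        by (intro sum.neutral) auto
      show ?thesis unfolding z0 by (rule zero_le)
    qed
  qed
  finally show ?thesis unfolding I_def .
qed

lemma le_enn2real_ennreal: "(x::real) \<le> enn2real (ennreal x)"
  by (cases "0 \<le> x") (auto simp: ennreal_neg)

theorem theorem1:
  fixes f :: "real^'w \<Rightarrow> real^'n \<Rightarrow> real^'c \<Rightarrow> real^'n"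
    and p :: "real^'w \<Rightarrow> real"
    and \<sigma> \<eta> :: real
    and U :: "(real^'c) set"
    and \<pi> :: "nat \<Rightarrow> real^'n \<Rightarrow> real^'c"
    and G S :: "(real^'n) set"
    and N :: nat
    and Q :: "(real^'n) set set"
    and v :: "nat \<Rightarrow> real" and np :: nat
    and k :: nat and q :: "(real^'n) set"
  assumes f_meas: "(\<lambda>(w, x, u). f w x u) \<in> borel_measurable borel"
    and p_meas: "p \<in> borel_measurable lborel"
    and p_nonneg: "\<forall>w. 0 \<le> p w"
    and p_int: "(\<integral>\<^sup>+ w. ennreal (p w) \<partial>lborel) = 1"
    and \<sigma>_pos: "\<sigma> > 0"
    and U_compact: "compact U"
    and \<pi>_meas: "\<forall>j. \<pi> j \<in> borel_measurable borel"
    and \<pi>_U: "\<forall>j x. \<pi> j x \<in> U"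
    and G_meas: "G \<in> sets borel" and S_meas: "S \<in> sets borel"
    and GS_disj: "G \<inter> S = {}"
    and Q_finite: "finite Q"
    and Q_cover: "\<Union>Q = S \<union> G"
    and Q_disj: "\<forall>q1\<in>Q. \<forall>q2\<in>Q. q1 \<noteq> q2 \<longrightarrow> q1 \<inter> q2 = {}"
    and Q_nonempty: "\<forall>q1\<in>Q. q1 \<noteq> {}"
    and Q_meas: "\<forall>q1\<in>Q. q1 \<in> sets borel"
    and Q_GS: "\<forall>q1\<in>Q. q1 \<subseteq> G \<or> q1 \<subseteq> S"
    and \<eta>_range: "0 < \<eta>" "\<eta> < 1"
    and v0: "v 0 = 0" and vnp: "v np = 1"
    and v_mono: "\<forall>i<np. v i \<le> v (Suc i)"
    and H_meas: "\<forall>k'<N. \<forall>q1\<in>Q. \<forall>i\<in>{1..np}.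
        Hset f \<pi> Q S G (trunc_eps \<sigma> \<eta>) v
          (Kfun f p \<pi> Q S G (trunc_eps \<sigma> \<eta>) \<eta> v np N (Suc k')) k' q1 i \<in> sets lborel"
    and k_le: "k \<le> N"
    and q_in: "q \<in> Q"
    and H_disj: "\<forall>k'\<in>{k..<N}. \<forall>q1\<in>Q.
        disjoint_family_on
          (\<lambda>i. Hset f \<pi> Q S G (trunc_eps \<sigma> \<eta>) v
                 (Kfun f p \<pi> Q S G (trunc_eps \<sigma> \<eta>) \<eta> v np N (Suc k')) k' q1 i) {1..np}"
  shows "(INF x\<in>q. Vfun f p \<sigma> \<pi> G S N k x) \<ge> Kfun f p \<pi> Q S G (trunc_eps \<sigma> \<eta>) \<eta> v np N k q"
proof -
  define \<epsilon> where "\<epsilon> = trunc_eps \<sigma> \<eta>"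
  define Kr where "Kr = Krec f p \<pi> Q S G \<epsilon> \<eta> v np N"
  define Vr where "Vr = Vrec f p \<sigma> \<pi> G S N"
  have s: "\<sigma> > 0" by (rule \<sigma>_pos)
  have e: "0 < \<eta>" "\<eta> < 1" by (rule \<eta>_range)+
  have GS: "x \<in> G \<Longrightarrow> x \<notin> S" for x using GS_disj by blast
  have Vprop: "Vr m \<in> borel_measurable borel \<and> (\<forall>x. 0 \<le> Vr m x \<and> Vr m x \<le> 1)" for m
  proof (induction m)
    case 0
    then show ?case using G_meas by (auto simp: Vr_def indicator_def)
  next
    case (Suc m)
    then have Vm[measurable]: "Vr m \<in> borel_measurable borel" and Vb: "\<And>x. 0 \<le> Vr m x" "\<And>x. Vr m x \<le> 1" by auto
    define k where "k = N - Suc m"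
    have pkm: "\<pi> k \<in> borel_measurable borel" using \<pi>_meas by auto
    have L: "0 \<le> (LINT y|lborel. Vr m y * post_pred f p \<sigma> x (\<pi> k x) y) \<and> (LINT y|lborel. Vr m y * post_pred f p \<sigma> x (\<pi> k x) y) \<le> 1" for x
    proof -
      note si = step_integral[OF f_meas p_meas p_nonneg p_int Vm Vb s, of x "\<pi> k x"]
      have "enn2real (\<integral>\<^sup>+w. ennreal (p w) * (\<integral>\<^sup>+y. ennreal (Vr m y * gauss_density \<sigma> (f w x (\<pi> k x)) y) \<partial>lborel) \<partial>lborel) \<le> enn2real 1"
        using si(2) by (intro enn2real_mono) auto
      then show ?thesis unfolding si(1) by simp
    qed
    have Vs: "Vr (Suc m) x = indicator G x + indicator S x * (LINT y|lborel. Vr m y * post_pred f p \<sigma> x (\<pi> k x) y)" for x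
      by (simp add: Vr_def k_def)
    have bnd: "0 \<le> Vr (Suc m) x \<and> Vr (Suc m) x \<le> 1" for x
      using L[of x] GS[of x] unfolding Vs by (auto simp: indicator_def)
    have pp: "(\<lambda>(x, y). post_pred f p \<sigma> x (\<pi> k x) y) \<in> borel_measurable (borel \<Otimes>\<^sub>M borel)"
      using pp_meas[OF f_meas p_meas pkm s] by (simp add: borel_prod)
    have "(\<lambda>z::((real^'n) \<times> (real^'n)). Vr m (snd z) * (\<lambda>(x, y). post_pred f p \<sigma> x (\<pi> k x) y) z) \<in> borel_measurable (borel \<Otimes>\<^sub>M borel)"
      using pp by measurable
    then have "(\<lambda>(x, y). Vr m y * post_pred f p \<sigma> x (\<pi> k x) y) \<in> borel_measurable (lborel \<Otimes>\<^sub>M lborel)"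
      by (simp add: borel_prod lborel_prod split_beta')
    then have "(\<lambda>x. LINT y|lborel. Vr m y * post_pred f p \<sigma> x (\<pi> k x) y) \<in> borel_measurable lborel"
      by (intro lborel.borel_measurable_lebesgue_integral) simp
    then have [measurable]: "(\<lambda>x. LINT y|lborel. Vr m y * post_pred f p \<sigma> x (\<pi> k x) y) \<in> borel_measurable borel"
      by simp
    have "Vr (Suc m) \<in> borel_measurable borel"
      unfolding Vs[abs_def] using G_meas S_meas by measurable
    then show ?case using bnd by blast
  qed
  have vnn: "j \<le> np \<Longrightarrow> 0 \<le> v j" for j
  proof (induction j)
    case 0 then show ?case using v0 by simp
  next
    case (Suc j)
    then have jn: "j < np" by simp
    then have a: "0 \<le> v j" using Suc by simp
    have b: "v j \<le> v (Suc j)" using v_mono jn by blast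
    show ?case using a b by linarith
  qed
  have zc: "zcell Q y \<in> Q \<and> y \<in> zcell Q y" if "y \<in> S \<union> G" for y
  proof -
    have "y \<in> \<Union>Q" using that Q_cover by simp
    then obtain q' where q': "q' \<in> Q" "y \<in> q'" by (rule UnionE)
    have "zcell Q y = q'" unfolding zcell_def
    proof (rule the_equality)
      show "q' \<in> Q \<and> y \<in> q'" using q' by simp
      fix q'' assume h: "q'' \<in> Q \<and> y \<in> q''"
      show "q'' = q'"
      proof (rule ccontr)
        assume "q'' \<noteq> q'"
        then have "q'' \<inter> q' = {}" using Q_disj h q' by simp
        then show False using h q' by auto
      qed
    qed
    then show ?thesis using q' by simp
  qed
  have qsub: "q' \<subseteq> S \<union> G" if "q' \<in> Q" for q'
  proof -
    have "q' \<subseteq> \<Union>Q" using that by (rule Union_upper)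
    then show ?thesis using Q_cover by simp
  qed
  have main: "m \<le> N - k \<Longrightarrow> \<forall>q'\<in>Q. \<forall>x\<in>q'. Kr m q' \<le> Vr m x" for m
  proof (induction m)
    case 0
    show ?case
    proof (intro ballI)
      fix q' x assume q': "q' \<in> Q" "x \<in> q'"
      show "Kr 0 q' \<le> Vr 0 x" using q' by (auto simp: Kr_def Vr_def cell_ind_def indicator_def)
    qed
  next
    case (Suc m)
    then have IH: "\<forall>q'\<in>Q. \<forall>x\<in>q'. Kr m q' \<le> Vr m x" by simp
    define kk where "kk = N - Suc m"
    have kk: "kk < N" "k \<le> kk" "N - Suc kk = m" using Suc.prems by (auto simp: kk_def)
    show ?case
    proof (intro ballI)
      fix q' x assume q': "q' \<in> Q" "x \<in> q'"
      have Ks: "Kr (Suc m) q' = cell_ind G q' + cell_ind S q' *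
          (\<Sum>i=1..np. v (i - 1) * (\<eta> ^ CARD('n) *
             (LINT w:Hset f \<pi> Q S G \<epsilon> v (Kr m) kk q' i|lborel. p w)))"
        by (simp add: Kr_def kk_def)
      have Vs: "Vr (Suc m) x = indicator G x + indicator S x * (LINT y|lborel. Vr m y * post_pred f p \<sigma> x (\<pi> kk x) y)"
        by (simp add: Vr_def kk_def)
      show "Kr (Suc m) q' \<le> Vr (Suc m) x"
      proof (cases "q' \<subseteq> G")
        case True
        then have "x \<in> G" "x \<notin> S" using q' GS by auto
        moreover have "\<not> q' \<subseteq> S" using True q' GS by auto
        ultimately show ?thesis unfolding Ks Vs using True by (simp add: cell_ind_def)
      next
        case False
        then have qS: "q' \<subseteq> S" using Q_GS q' by auto
        then have xS: "x \<in> S" "x \<notin> G" using q' GS by auto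
        have Vm: "Vr m \<in> borel_measurable borel" and Vb: "\<And>x. 0 \<le> Vr m x" "\<And>x. Vr m x \<le> 1" using Vprop[of m] by auto
        note si = step_integral[OF f_meas p_meas p_nonneg p_int Vm Vb s, of x "\<pi> kk x"]
        define X where "X = (\<integral>\<^sup>+w. ennreal (p w) * (\<integral>\<^sup>+y. ennreal (Vr m y * gauss_density \<sigma> (f w x (\<pi> kk x)) y) \<partial>lborel) \<partial>lborel)"
        define Hs where "Hs i = Hset f \<pi> Q S G \<epsilon> v (Kr m) kk q' i" for i
        have Kt: "Ktilde Q S G (Kr m) y \<le> Vr m y" for y
        proof (cases "y \<in> S \<union> G")
          case True
          then show ?thesis using zc[OF True] IH by (simp add: Ktilde_def)
        next
          case False
          then show ?thesis using Vb by (simp add: Ktilde_def)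
        qed
        have Hm: "\<forall>i\<in>{1..np}. Hs i \<in> sets lborel"
          using H_meas kk q' unfolding Hs_def Kr_def \<epsilon>_def Kfun_def by auto
        have Hd: "disjoint_family_on Hs {1..np}"
          using H_disj kk q' unfolding Hs_def Kr_def \<epsilon>_def Kfun_def by auto
        have cnn: "\<forall>i\<in>{1..np}. 0 \<le> v (i - 1)" using vnn by auto
        have HV: "v (i - 1) \<le> Vr m y"
          if i: "i \<in> {1..np}" and w: "w \<in> Hs i" and y: "\<forall>j. \<bar>y $ j - f w x (\<pi> kk x) $ j\<bar> \<le> trunc_eps \<sigma> \<eta>" for i w y
        proof -
          define \<gamma> where "\<gamma> = y - f w x (\<pi> kk x)"
          have "\<forall>j. \<bar>\<gamma> $ j\<bar> \<le> \<epsilon>" using y by (simp add: \<gamma>_def \<epsilon>_def)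
          then have "v (i - 1) \<le> Ktilde Q S G (Kr m) (f w x (\<pi> kk x) + \<gamma>)"
            using w q'(2) unfolding Hs_def Hset_def by blast
          also have "f w x (\<pi> kk x) + \<gamma> = y" by (simp add: \<gamma>_def)
          finally show ?thesis using Kt[of y] by simp
        qed
        have low: "ennreal (\<Sum>i=1..np. v (i - 1) * (\<eta> ^ CARD('n) * (LINT w:Hs i|lborel. p w))) \<le> X"
          unfolding X_def
          by (rule lower_sum[OF s e p_meas p_nonneg p_int Vb(1) Hm Hd cnn HV])
        have "(\<Sum>i=1..np. v (i - 1) * (\<eta> ^ CARD('n) * (LINT w:Hs i|lborel. p w)))
            \<le> enn2real (ennreal (\<Sum>i=1..np. v (i - 1) * (\<eta> ^ CARD('n) * (LINT w:Hs i|lborel. p w))))"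
          by (rule le_enn2real_ennreal)
        also have "\<dots> \<le> enn2real X"
        proof (rule enn2real_mono[OF low])
          show "X < \<top>" using si(2) unfolding X_def by (meson ennreal_less_top le_less_trans ennreal_one_less_top)
        qed
        also have "\<dots> = (LINT y|lborel. Vr m y * post_pred f p \<sigma> x (\<pi> kk x) y)"
          unfolding X_def si(1) ..
        finally show ?thesis unfolding Ks Vs using qS xS q' False
          by (simp add: cell_ind_def Hs_def)
      qed
    qed
  qed
  have "\<forall>x\<in>q. Kr (N - k) q \<le> Vr (N - k) x" using main[of "N - k"] q_in by auto
  then have "\<forall>x\<in>q. Kfun f p \<pi> Q S G (trunc_eps \<sigma> \<eta>) \<eta> v np N k q \<le> Vfun f p \<sigma> \<pi> G S N k x"
    by (simp add: Kfun_def Vfun_def Kr_def Vr_def \<epsilon>_def)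
  moreover have "q \<noteq> {}" using Q_nonempty q_in by auto
  ultimately show ?thesis by (intro cINF_greatest) auto
qed

end
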